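(* Let $K$ be an algebraically closed field of positive characteristic and $G=\mathrm{SL}_2(K)$. For all non-negative integers $\lambda,\mu,\nu$, $\dim\mathrm{Hom}_{G}(L(\lambda),L(\mu)\otimes L(\nu))\le 1$.
   Context: Dominant weights of $\mathrm{SL}_2(K)$ are identified with non-negative integers; $L(\lambda)$ is the simple rational module with highest weight $\lambda$. *)

theory Defs
  imports "HOL-Computational_Algebra.Polynomial"
begin

text \<open>Elements of SL_2(K) are quadruples (a,b,c,d) standing for the matrix [[a,b],[c,d]].
  Modules are spaces of K-valued functions; G acts by right translation of the
  argument by the matrix (row vector times matrix).\<close>

definition alg_closed :: "'k::field itself \<Rightarrow> bool" where
  "alg_closed _ \<longleftrightarrow> (\<forall>p::'k poly. degree p > 0 \<longrightarrow> (\<exists>x. poly p x = 0))"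

definition pos_char :: "'k::field itself \<Rightarrow> bool" where
  "pos_char _ \<longleftrightarrow> (\<exists>n::nat. n > 0 \<and> of_nat n = (0::'k))"

definition SL2 :: "('k::field \<times> 'k \<times> 'k \<times> 'k) set" where
  "SL2 = {(a,b,c,d). a * d - b * c = 1}"

definition vmul :: "'k::field \<times> 'k \<Rightarrow> 'k \<times> 'k \<times> 'k \<times> 'k \<Rightarrow> 'k \<times> 'k" where
  "vmul v g = (case v of (x,y) \<Rightarrow> case g of (a,b,c,d) \<Rightarrow> (x*a + y*c, x*b + y*d))"

definition act1 :: "'k::field \<times> 'k \<times> 'k \<times> 'k \<Rightarrow> ('k \<times> 'k \<Rightarrow> 'k) \<Rightarrow> ('k \<times> 'k \<Rightarrow> 'k)" where
  "act1 g f = (\<lambda>v. f (vmul v g))"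

definition act2 :: "'k::field \<times> 'k \<times> 'k \<times> 'k \<Rightarrow> (('k \<times> 'k) \<times> ('k \<times> 'k) \<Rightarrow> 'k)
    \<Rightarrow> (('k \<times> 'k) \<times> ('k \<times> 'k) \<Rightarrow> 'k)" where
  "act2 g F = (\<lambda>(v,w). F (vmul v g, vmul w g))"

definition kspan :: "('a \<Rightarrow> 'k::field) set \<Rightarrow> ('a \<Rightarrow> 'k) set" where
  "kspan S = {f. \<exists>T c. finite T \<and> T \<subseteq> S \<and> f = (\<lambda>z. \<Sum>h\<in>T. c h * h z)}"

text \<open>L(lambda): the G-submodule of the degree-lambda binary forms (= H^0(lambda))
  generated by the highest weight vector x^lambda; it is the simple socle of H^0(lambda).\<close>
definition Lmod :: "nat \<Rightarrow> ('k::field \<times> 'k \<Rightarrow> 'k) set" where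
  "Lmod n = kspan {act1 g (\<lambda>(x,y). x ^ n) | g. g \<in> SL2}"

definition Ltens :: "nat \<Rightarrow> nat \<Rightarrow> (('k::field \<times> 'k) \<times> ('k \<times> 'k) \<Rightarrow> 'k) set" where
  "Ltens m n = kspan {(\<lambda>(v,w). f v * h w) | f h. f \<in> Lmod m \<and> h \<in> Lmod n}"

text \<open>Hom_G(L(lambda), L(mu) \<otimes> L(nu)), maps considered on L(lambda)\<close>
definition HomG :: "nat \<Rightarrow> nat \<Rightarrow> nat \<Rightarrow>
    (('k::field \<times> 'k \<Rightarrow> 'k) \<Rightarrow> (('k \<times> 'k) \<times> ('k \<times> 'k) \<Rightarrow> 'k)) set" where
  "HomG l m n = {\<phi>. (\<forall>f\<in>Lmod l. \<phi> f \<in> Ltens m n)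
     \<and> (\<forall>f\<in>Lmod l. \<forall>h\<in>Lmod l. \<phi> (\<lambda>z. f z + h z) = (\<lambda>z. \<phi> f z + \<phi> h z))
     \<and> (\<forall>f\<in>Lmod l. \<forall>c. \<phi> (\<lambda>z. c * f z) = (\<lambda>z. c * \<phi> f z))
     \<and> (\<forall>g\<in>SL2. \<forall>f\<in>Lmod l. \<phi> (act1 g f) = act2 g (\<phi> f))}"

end

theory Submission
  imports Defs
begin


lemma kspan_zero: "(\<lambda>z. 0) \<in> kspan S"
  unfolding kspan_def by (rule CollectI, rule exI[of _ "{}"], auto)

lemma kspan_base: "s \<in> S \<Longrightarrow> s \<in> kspan S"
  unfolding kspan_def by (rule CollectI, rule exI[of _ "{s}"], rule exI[of _ "\<lambda>_. 1"], auto)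

lemma kspan_smult: "f \<in> kspan S \<Longrightarrow> (\<lambda>z. k * f z) \<in> kspan S"
proof -
  assume "f \<in> kspan S"
  then obtain T c where T: "finite T" "T \<subseteq> S" "f = (\<lambda>z. \<Sum>h\<in>T. c h * h z)"
    unfolding kspan_def by blast
  show ?thesis unfolding kspan_def
    by (rule CollectI, rule exI[of _ T], rule exI[of _ "\<lambda>h. k * c h"])
       (simp add: T sum_distrib_left mult.assoc)
qed

lemma kspan_add: "f \<in> kspan S \<Longrightarrow> g \<in> kspan S \<Longrightarrow> (\<lambda>z. f z + g z) \<in> kspan S"
proof -
  assume "f \<in> kspan S" "g \<in> kspan S"
  then obtain T c T2 c2 where T: "finite T" "T \<subseteq> S" "f = (\<lambda>z. \<Sum>h\<in>T. c h * h z)"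
   and T2: "finite T2" "T2 \<subseteq> S" "g = (\<lambda>z. \<Sum>h\<in>T2. c2 h * h z)"
    unfolding kspan_def by blast
  define d where "d h = (if h \<in> T then c h else 0) + (if h \<in> T2 then c2 h else 0)" for h
  have "(\<lambda>z. f z + g z) = (\<lambda>z. \<Sum>h\<in>T \<union> T2. d h * h z)"
  proof
    fix z
    have 1: "(\<Sum>h\<in>T. c h * h z) = (\<Sum>h\<in>T \<union> T2. (if h \<in> T then c h else 0) * h z)"
      by (rule sum.mono_neutral_cong_left) (use T T2 in auto)
    have 2: "(\<Sum>h\<in>T2. c2 h * h z) = (\<Sum>h\<in>T \<union> T2. (if h \<in> T2 then c2 h else 0) * h z)"
      by (rule sum.mono_neutral_cong_left) (use T T2 in auto)
    show "f z + g z = (\<Sum>h\<in>T \<union> T2. d h * h z)"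
      unfolding T(3) T2(3) 1 2 d_def by (simp add: sum.distrib distrib_right)
  qed
  then show ?thesis unfolding kspan_def using T T2 by blast
qed

lemma kspan_sum: "finite T \<Longrightarrow> (\<forall>h\<in>T. F h \<in> kspan S) \<Longrightarrow> (\<lambda>z. \<Sum>h\<in>T. c h * F h z) \<in> kspan S"
proof (induction T rule: finite_induct)
  case empty then show ?case using kspan_zero by simp
next
  case (insert x T)
  have "(\<lambda>z. \<Sum>h\<in>insert x T. c h * F h z) = (\<lambda>z. c x * F x z + (\<Sum>h\<in>T. c h * F h z))"
    using insert by simp
  then show ?case using insert kspan_add kspan_smult by fastforce
qed

lemma kspan_image: "f \<in> kspan S \<Longrightarrow> (\<forall>s\<in>S. (\<lambda>z. s (\<alpha> z)) \<in> kspan S') \<Longrightarrow> (\<lambda>z. f (\<alpha> z)) \<in> kspan S'"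
proof -
  assume a: "f \<in> kspan S" "\<forall>s\<in>S. (\<lambda>z. s (\<alpha> z)) \<in> kspan S'"
  then obtain T c where T: "finite T" "T \<subseteq> S" "f = (\<lambda>z. \<Sum>h\<in>T. c h * h z)"
    unfolding kspan_def by blast
  have "(\<lambda>z. \<Sum>h\<in>T. c h * (\<lambda>z. h (\<alpha> z)) z) \<in> kspan S'"
    by (rule kspan_sum) (use T a in auto)
  then show ?thesis using T by simp
qed

lemma kspan_lin: "f \<in> kspan S \<Longrightarrow> (\<forall>s\<in>S. s a = k * s b) \<Longrightarrow> f a = k * f b"
proof -
  assume a: "f \<in> kspan S" "\<forall>s\<in>S. s a = k * s b"
  then obtain T c where T: "finite T" "T \<subseteq> S" "f = (\<lambda>z. \<Sum>h\<in>T. c h * h z)"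
    unfolding kspan_def by blast
  have "(\<Sum>h\<in>T. c h * h a) = (\<Sum>h\<in>T. k * (c h * h b))"
    by (rule sum.cong) (use T a in auto)
  then show ?thesis using T by (simp add: sum_distrib_left)
qed

lemma kspan_poly: "f \<in> kspan S \<Longrightarrow> (\<forall>s\<in>S. \<exists>P. \<forall>t. s (\<alpha> t) = poly P t) \<Longrightarrow> \<exists>P. \<forall>t. f (\<alpha> t) = poly P t"
proof -
  assume a: "f \<in> kspan S" "\<forall>s\<in>S. \<exists>P. \<forall>t. s (\<alpha> t) = poly P t"
  then obtain T c where T: "finite T" "T \<subseteq> S" "f = (\<lambda>z. \<Sum>h\<in>T. c h * h z)"
    unfolding kspan_def by blast
  from a T have "\<forall>s\<in>T. \<exists>P. \<forall>t. s (\<alpha> t) = poly P t" by blast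
  then obtain Q where Q: "\<forall>s\<in>T. \<forall>t. s (\<alpha> t) = poly (Q s) t" by metis
  show ?thesis
    by (rule exI[of _ "\<Sum>s\<in>T. smult (c s) (Q s)"]) (simp add: T poly_sum Q)
qed

lemma infinite_K: assumes "alg_closed TYPE('k::field)" shows "infinite (UNIV :: 'k set)"
proof
  assume fin: "finite (UNIV :: 'k set)"
  define q :: "'k poly" where "q = (\<Prod>a\<in>UNIV. [:-a,1:])"
  define p where "p = q + 1"
  have dq: "degree q = card (UNIV :: 'k set)"
    unfolding q_def by (subst degree_prod_sum_eq) auto
  have "card (UNIV :: 'k set) > 0" using fin by (simp add: card_gt_0_iff)
  then have dp: "degree p > 0" unfolding p_def using dq
    by (metis degree_1 degree_add_eq_left)
  then obtain x where "poly p x = 0" using assms unfolding alg_closed_def by blast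
  moreover have "poly q x = 0" unfolding q_def poly_prod
    by (rule prod_zero) (use fin in auto)
  ultimately show False unfolding p_def by simp
qed

lemma ex_s: assumes "infinite (UNIV :: 'k::field set)" "e1 \<noteq> e2"
  shows "\<exists>s::'k. s \<noteq> 0 \<and> s ^ e1 \<noteq> s ^ e2"
proof -
  define P :: "'k poly" where "P = monom 1 e1 - monom 1 e2"
  have "coeff P e1 = 1" using assms(2) unfolding P_def by (simp add: coeff_monom)
  then have "P \<noteq> 0" by auto
  then have "finite (insert 0 {x. poly P x = 0})" using poly_roots_finite by auto
  then obtain s where "s \<notin> insert 0 {x. poly P x = 0}" using ex_new_if_finite assms(1) by blast
  then show ?thesis unfolding P_def by (auto simp: poly_monom)
qed




definition mulm :: "'k::field \<times> 'k \<times> 'k \<times> 'k \<Rightarrow> 'k \<times> 'k \<times> 'k \<times> 'k \<Rightarrow> 'k \<times> 'k \<times> 'k \<times> 'k" where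
  "mulm g h = (case g of (a,b,c,d) \<Rightarrow> case h of (a',b',c',d') \<Rightarrow>
     (a*a' + b*c', a*b' + b*d', c*a' + d*c', c*b' + d*d'))"

lemma vmul_mulm: "vmul (vmul v g) h = vmul v (mulm g h)"
  by (cases v; cases g; cases h) (simp add: vmul_def mulm_def algebra_simps)

lemma SL2_mulm: "g \<in> SL2 \<Longrightarrow> h \<in> SL2 \<Longrightarrow> mulm g h \<in> (SL2 :: ('k::field \<times> _) set)"
proof (cases g; cases h)
  fix a b c d a' b' c' d' :: 'k
  assume "g \<in> SL2" "h \<in> SL2" "g = (a,b,c,d)" "h = (a',b',c',d')"
  then have 1: "a*d - b*c = 1" "a'*d' - b'*c' = 1" by (auto simp: SL2_def)
  have "(a*a' + b*c') * (c*b' + d*d') - (a*b' + b*d') * (c*a' + d*c') = (a*d - b*c)*(a'*d' - b'*c')"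
    by (simp add: algebra_simps)
  then show ?thesis using 1 \<open>g = _\<close> \<open>h = _\<close> by (simp add: mulm_def SL2_def)
qed

lemma act1_gen: "act1 (a,b,c,d) (\<lambda>(x,y). x ^ n) = (\<lambda>v. (fst v * a + snd v * c) ^ n)"
  by (auto simp: act1_def vmul_def split: prod.splits)

lemma Lmod_act: assumes "g \<in> SL2" "f \<in> Lmod l" shows "act1 g f \<in> (Lmod l :: ('k::field \<times> 'k \<Rightarrow> 'k) set)"
proof -
  have "(\<lambda>z. f (vmul z g)) \<in> Lmod l"
    using assms(2) unfolding Lmod_def
  proof (rule kspan_image, intro ballI)
    fix s assume "s \<in> {act1 g (\<lambda>(x, y). x ^ l) |g. g \<in> (SL2 :: ('k \<times> _) set)}"
    then obtain g0 where g0: "g0 \<in> SL2" "s = act1 g0 (\<lambda>(x, y). x ^ l)" by blast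
    have "(\<lambda>z. s (vmul z g)) = act1 (mulm g g0) (\<lambda>(x, y). x ^ l)"
      unfolding g0 act1_def by (simp add: vmul_mulm)
    moreover have "mulm g g0 \<in> SL2" using SL2_mulm assms g0 by blast
    ultimately show "(\<lambda>z. s (vmul z g)) \<in> kspan {act1 g (\<lambda>(x, y). x ^ l) |g. g \<in> SL2}"
      by (intro kspan_base) blast
  qed
  then show ?thesis unfolding act1_def .
qed

definition repf :: "nat \<Rightarrow> (nat \<Rightarrow> 'k::field) \<Rightarrow> ('k \<times> 'k \<Rightarrow> 'k)" where
  "repf l a = (\<lambda>p. \<Sum>j\<le>l. a j * fst p ^ (l - j) * snd p ^ j)"

lemma Lmod_rep: "f \<in> Lmod l \<Longrightarrow> \<exists>a. f = repf l a"
proof -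
  assume "f \<in> Lmod l"
  then obtain T c where T: "finite T" "T \<subseteq> {act1 g (\<lambda>(x, y). x ^ l) |g. g \<in> SL2}"
     "f = (\<lambda>z. \<Sum>h\<in>T. c h * h z)"
    unfolding kspan_def Lmod_def by blast
  have "\<forall>h\<in>T. \<exists>a. h = repf l a"
  proof
    fix h assume "h \<in> T"
    then obtain g where "h = act1 g (\<lambda>(x, y). x ^ l)" using T by blast
    moreover obtain a b c d where "g = (a,b,c,d)" by (cases g)
    ultimately have h: "h = act1 (a,b,c,d) (\<lambda>(x, y). x ^ l)" by simp
    have "h = repf l (\<lambda>j. of_nat (l choose j) * c ^ j * a ^ (l - j))"
    proof
      fix v
      show "h v = repf l (\<lambda>j. of_nat (l choose j) * c ^ j * a ^ (l - j)) v"
        unfolding h act1_gen repf_def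
        by (subst add.commute, subst binomial_ring) (simp add: power_mult_distrib mult_ac)
    qed
    then show "\<exists>a. h = repf l a" by blast
  qed
  then obtain A where A: "\<forall>h\<in>T. h = repf l (A h)" by metis
  have "f = repf l (\<lambda>j. \<Sum>h\<in>T. c h * A h j)"
  proof
    fix p
    have "f p = (\<Sum>h\<in>T. c h * repf l (A h) p)" using A T by simp
    also have "\<dots> = (\<Sum>h\<in>T. \<Sum>j\<le>l. c h * A h j * fst p ^ (l - j) * snd p ^ j)"
      unfolding repf_def by (simp add: sum_distrib_left mult_ac)
    also have "\<dots> = (\<Sum>j\<le>l. \<Sum>h\<in>T. c h * A h j * fst p ^ (l - j) * snd p ^ j)"
      by (rule sum.swap)
    also have "\<dots> = repf l (\<lambda>j. \<Sum>h\<in>T. c h * A h j) p"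
      unfolding repf_def by (simp add: sum_distrib_right)
    finally show "f p = repf l (\<lambda>j. \<Sum>h\<in>T. c h * A h j) p" .
  qed
  then show ?thesis by blast
qed

lemma Lmod_hom: "f \<in> Lmod l \<Longrightarrow> f (r * x, r * y) = r ^ l * f (x, y)"
  unfolding Lmod_def
  by (rule kspan_lin) (auto simp: act1_gen power_mult_distrib[symmetric] algebra_simps)

lemma Ltens_hom: "F \<in> Ltens m n \<Longrightarrow>
   F ((r * x1, r * x2), (q * y1, q * y2)) = (r ^ m * q ^ n) * F ((x1, x2), (y1, y2))"
  unfolding Ltens_def
  by (rule kspan_lin) (auto simp: Lmod_hom)

lemma Lmod_poly: fixes f :: "'k::field \<times> 'k \<Rightarrow> 'k" assumes "f \<in> Lmod l" shows "\<exists>P. \<forall>t. f (x1 + t * u1, x2 + t * u2) = poly P t"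
proof -
  have "\<forall>s\<in>{act1 g (\<lambda>(x, y). x ^ l) |g. g \<in> SL2}. \<exists>P. \<forall>t. s (x1 + t * u1, x2 + t * u2) = poly P t"
  proof
    fix s assume "s \<in> {act1 g (\<lambda>(x, y). x ^ l) |g. g \<in> (SL2::('k \<times> _) set)}"
    then obtain g where "s = act1 g (\<lambda>(x, y). x ^ l)" by blast
    moreover obtain a b c d where "g = (a,b,c,d)" by (cases g)
    ultimately have s: "s = act1 (a,b,c,d) (\<lambda>(x, y). x ^ l)" by simp
    show "\<exists>P. \<forall>t. s (x1 + t * u1, x2 + t * u2) = poly P t"
      by (rule exI[of _ "[: x1 * a + x2 * c, u1 * a + u2 * c :] ^ l"])
         (simp add: s act1_gen poly_power algebra_simps)
  qed
  from kspan_poly[OF assms[unfolded Lmod_def] this] show ?thesis by simp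
qed

lemma Ltens_poly: fixes F :: "('k::field \<times> 'k) \<times> ('k \<times> 'k) \<Rightarrow> 'k" shows "F \<in> Ltens m n \<Longrightarrow>
   \<exists>P. \<forall>t. F ((x1 + t * u1, x2 + t * u2), (y1 + t * w1, y2 + t * w2)) = poly P t"
proof -
  assume F: "F \<in> Ltens m n"
  have "\<forall>s\<in>{\<lambda>(v, w). f v * h w |f h. f \<in> (Lmod m :: ('k \<times> 'k \<Rightarrow> 'k) set) \<and> h \<in> Lmod n}.
     \<exists>R. \<forall>t. s ((x1 + t * u1, x2 + t * u2), (y1 + t * w1, y2 + t * w2)) = poly R t"
  proof
  fix s assume "s \<in> {\<lambda>(v, w). f v * h w |f h. f \<in> (Lmod m :: ('k \<times> 'k \<Rightarrow> 'k) set) \<and> h \<in> Lmod n}"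
  then obtain f h where s: "s = (\<lambda>(v, w). f v * h w)" "f \<in> Lmod m" "h \<in> Lmod n" by blast
  obtain P where P: "\<forall>t. f (x1 + t * u1, x2 + t * u2) = poly P t" using Lmod_poly s(2) by blast
  obtain Q where Q: "\<forall>t. h (y1 + t * w1, y2 + t * w2) = poly Q t" using Lmod_poly s(3) by blast
  show "\<exists>R. \<forall>t. s ((x1 + t * u1, x2 + t * u2), (y1 + t * w1, y2 + t * w2)) = poly R t"
    by (rule exI[of _ "P * Q"]) (simp add: s P Q)
  qed
  from kspan_poly[OF F[unfolded Ltens_def] this] show ?thesis by simp
qed

lemma density:
  assumes inf: "infinite (UNIV :: 'k::field set)" and F: "F \<in> (Ltens m n :: (('k \<times> 'k) \<times> ('k \<times> 'k) \<Rightarrow> 'k) set)"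
    and van: "\<forall>x1 x2 y1 y2. x1 * y2 - x2 * y1 \<noteq> 0 \<longrightarrow> F ((x1, x2), (y1, y2)) = 0"
  shows "F = (\<lambda>_. 0)"
proof
  fix z :: "('k \<times> 'k) \<times> ('k \<times> 'k)"
  obtain x1 x2 y1 y2 where z: "z = ((x1, x2), (y1, y2))" by (metis prod.collapse)
  obtain P where P: "\<forall>t. F ((x1 + t * 1, x2 + t * 0), (y1 + t * 0, y2 + t * 1)) = poly P t"
    using Ltens_poly[OF F] by blast
  define D :: "'k poly" where "D = [: x1 * y2 - x2 * y1, x1 + y2, 1 :]"
  have Dnz: "D \<noteq> 0" unfolding D_def by simp
  have Dv: "poly D t = (x1 + t) * (y2 + t) - x2 * y1" for t
    unfolding D_def by (simp add: algebra_simps)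
  have "P = 0"
  proof (rule ccontr)
    assume "P \<noteq> 0"
    then have "finite ({t. poly P t = 0} \<union> {t. poly D t = 0})"
      using poly_roots_finite Dnz by blast
    moreover have "{t. poly P t = 0} \<union> {t. poly D t = 0} = UNIV"
    proof -
      have "poly P t = 0" if "poly D t \<noteq> 0" for t
        using van[rule_format, of "x1 + t" "y2 + t" x2 y1] that P Dv by auto
      then show ?thesis by blast
    qed
    ultimately show False using inf by simp
  qed
  then show "F z = 0" using P[rule_format, of 0] z by simp
qed




lemma Lmod_add: "f \<in> Lmod l \<Longrightarrow> g \<in> Lmod l \<Longrightarrow> (\<lambda>z. f z + g z) \<in> Lmod l"
  unfolding Lmod_def by (rule kspan_add)
lemma Lmod_smult: "f \<in> Lmod l \<Longrightarrow> (\<lambda>z. k * f z) \<in> Lmod l"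
  unfolding Lmod_def by (rule kspan_smult)

lemma HomG_in: "\<phi> \<in> HomG l m n \<Longrightarrow> f \<in> Lmod l \<Longrightarrow> \<phi> f \<in> Ltens m n"
  unfolding HomG_def by blast
lemma HomG_add: "\<phi> \<in> HomG l m n \<Longrightarrow> f \<in> Lmod l \<Longrightarrow> h \<in> Lmod l \<Longrightarrow> \<phi> (\<lambda>z. f z + h z) = (\<lambda>z. \<phi> f z + \<phi> h z)"
  unfolding HomG_def by blast
lemma HomG_smult: "\<phi> \<in> HomG l m n \<Longrightarrow> f \<in> Lmod l \<Longrightarrow> \<phi> (\<lambda>z. c * f z) = (\<lambda>z. c * \<phi> f z)"
  unfolding HomG_def by blast
lemma HomG_eq: "\<phi> \<in> HomG l m n \<Longrightarrow> g \<in> SL2 \<Longrightarrow> f \<in> Lmod l \<Longrightarrow> \<phi> (act1 g f) = act2 g (\<phi> f)"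
  unfolding HomG_def by blast

lemma lin_comb:
  assumes phi: "\<phi> \<in> HomG l m n" and f: "f \<in> Lmod l" and g: "g \<in> Lmod l"
  shows "\<phi> (\<lambda>z. f z + k * g z) p = \<phi> f p + k * \<phi> g p"
proof -
  have g': "(\<lambda>z. k * g z) \<in> Lmod l" using g Lmod_smult by blast
  have "\<phi> (\<lambda>z. f z + (\<lambda>z. k * g z) z) = (\<lambda>z. \<phi> f z + \<phi> (\<lambda>z. k * g z) z)"
    using HomG_add[OF phi f g'] .
  moreover have "\<phi> (\<lambda>z. k * g z) = (\<lambda>z. k * \<phi> g z)" using HomG_smult[OF phi g] .
  ultimately show ?thesis by simp
qed

lemma vanish:
  fixes \<phi> :: "('k::field \<times> 'k \<Rightarrow> 'k) \<Rightarrow> (('k \<times> 'k) \<times> ('k \<times> 'k) \<Rightarrow> 'k)"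
  assumes inf: "infinite (UNIV::'k set)" and phi: "\<phi> \<in> HomG l m n"
  shows "finite J \<Longrightarrow> J \<subseteq> {..l} \<Longrightarrow> (\<forall>j\<in>J. int l - 2 * int j \<noteq> int m - int n) \<Longrightarrow>
    h \<in> Lmod l \<Longrightarrow> h = (\<lambda>p. \<Sum>j\<in>J. a j * fst p ^ (l - j) * snd p ^ j) \<Longrightarrow> \<phi> h ((1,0),(0,1)) = 0"
proof (induction J arbitrary: a h rule: finite_induct)
  case empty
  then have h0: "h = (\<lambda>z. 0 * h z)" by simp
  have "\<phi> (\<lambda>z. 0 * h z) = (\<lambda>z. 0 * \<phi> h z)" using HomG_smult[OF phi empty(3)] .
  then have "\<phi> h = (\<lambda>z. 0)" using h0 by simp
  then show ?case by simp
next
  case (insert j1 J)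
  note pr = insert.prems
  have j1: "j1 \<le> l" using insert by auto
  have "m + j1 \<noteq> l - j1 + n" using pr(2) j1 by auto
  then obtain s :: 'k where s: "s \<noteq> 0" "s ^ (m + j1) \<noteq> s ^ (l - j1 + n)" using ex_s inf by blast
  define ts :: "'k \<times> 'k \<times> 'k \<times> 'k" where "ts = (s, 0, 0, inverse s)"
  have ts: "ts \<in> SL2" using s unfolding ts_def SL2_def by simp
  define w where "w j = s ^ (l - j) * inverse s ^ j" for j
  define h1 where "h1 = act1 ts h"
  have h1L: "h1 \<in> Lmod l" unfolding h1_def using Lmod_act[OF ts pr(3)] .
  define h' where "h' = (\<lambda>z. h1 z + (- w j1) * h z)"
  have h'L: "h' \<in> Lmod l" unfolding h'_def using Lmod_add[OF h1L Lmod_smult[OF pr(3)]] .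
  have h'rep: "h' = (\<lambda>p. \<Sum>j\<in>J. (a j * (w j - w j1)) * fst p ^ (l - j) * snd p ^ j)"
  proof
    fix p :: "'k \<times> 'k"
    obtain x y where p: "p = (x, y)" by (cases p)
    have "h1 p = (\<Sum>j\<in>insert j1 J. a j * (x * s) ^ (l - j) * (y * inverse s) ^ j)"
      unfolding h1_def act1_def ts_def vmul_def p pr(4) by simp
    also have "\<dots> = (\<Sum>j\<in>insert j1 J. a j * w j * x ^ (l - j) * y ^ j)"
      unfolding w_def by (simp add: power_mult_distrib mult_ac)
    finally have 1: "h1 p = \<dots>" .
    have "h' p = (\<Sum>j\<in>insert j1 J. a j * w j * x ^ (l - j) * y ^ j) + (- w j1) * (\<Sum>j\<in>insert j1 J. a j * x ^ (l - j) * y ^ j)"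
      unfolding h'_def 1 by (simp add: pr(4) p)
    also have "\<dots> = (\<Sum>j\<in>insert j1 J. a j * w j * x ^ (l - j) * y ^ j + (- w j1) * (a j * x ^ (l - j) * y ^ j))"
      by (simp only: sum.distrib sum_distrib_left)
    also have "\<dots> = (\<Sum>j\<in>insert j1 J. (a j * (w j - w j1)) * x ^ (l - j) * y ^ j)"
      by (rule sum.cong) (simp_all add: algebra_simps)
    also have "\<dots> = (\<Sum>j\<in>J. (a j * (w j - w j1)) * x ^ (l - j) * y ^ j)"
      using insert(1,2) by simp
    finally show "h' p = (\<Sum>j\<in>J. (a j * (w j - w j1)) * fst p ^ (l - j) * snd p ^ j)" using p by simp
  qed
  have IH: "\<phi> h' ((1,0),(0,1)) = 0"
    by (rule insert.IH[OF _ _ h'L h'rep]) (use pr(1,2) in auto)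
  have "\<phi> h' ((1,0),(0,1)) = \<phi> h1 ((1,0),(0,1)) + (- w j1) * \<phi> h ((1,0),(0,1))"
    unfolding h'_def by (rule lin_comb[OF phi h1L pr(3)])
  moreover have "\<phi> h1 ((1,0),(0,1)) = \<phi> h ((s,0),(0, inverse s))"
    unfolding h1_def HomG_eq[OF phi ts pr(3)] by (simp add: act2_def ts_def vmul_def)
  moreover have "\<phi> h ((s * 1, s * 0),(inverse s * 0, inverse s * 1)) = (s ^ m * inverse s ^ n) * \<phi> h ((1,0),(0,1))"
    by (rule Ltens_hom) (rule HomG_in[OF phi pr(3)])
  ultimately have eq: "(s ^ m * inverse s ^ n - w j1) * \<phi> h ((1,0),(0,1)) = 0"
    using IH by (simp add: algebra_simps) (metis)
  have "s ^ m * inverse s ^ n \<noteq> w j1"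
  proof
    assume a: "s ^ m * inverse s ^ n = w j1"
    have "s ^ m * inverse s ^ n * (s ^ n * s ^ j1) = s ^ (m + j1)"
      using s by (simp add: power_add field_simps)
    moreover have "w j1 * (s ^ n * s ^ j1) = s ^ (l - j1 + n)"
      using s unfolding w_def by (simp add: power_add field_simps)
    ultimately show False using a s by simp
  qed
  then show ?case using eq by simp
qed




definition J0set :: "nat \<Rightarrow> nat \<Rightarrow> nat \<Rightarrow> nat set" where
  "J0set l m n = {j. j \<le> l \<and> int l - 2 * int j = int m - int n}"

definition psi :: "nat \<Rightarrow> nat \<Rightarrow> nat \<Rightarrow> ('k::field \<times> 'k \<Rightarrow> 'k) \<Rightarrow> 'k" where
  "psi l m n h = (\<Sum>j\<in>J0set l m n. (SOME a. h = repf l a) j)"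

lemma J0_cases: "J0set l m n = {} \<or> (\<exists>j0. J0set l m n = {j0})"
proof (cases "J0set l m n = {}")
  case False
  then obtain j0 where j0: "j0 \<in> J0set l m n" by blast
  have "J0set l m n = {j0}" using j0 unfolding J0set_def by auto
  then show ?thesis by blast
qed simp

lemma G_vanish:
  fixes \<phi> :: "('k::field \<times> 'k \<Rightarrow> 'k) \<Rightarrow> (('k \<times> 'k) \<times> ('k \<times> 'k) \<Rightarrow> 'k)"
  assumes inf: "infinite (UNIV::'k set)" and phi: "\<phi> \<in> HomG l m n"
    and h: "h \<in> Lmod l" "h = repf l b" and b: "\<forall>j\<in>J0set l m n. b j = 0"
  shows "\<phi> h ((1,0),(0,1)) = 0"
proof -
  have "h = (\<lambda>p. \<Sum>j\<in>{..l} - J0set l m n. b j * fst p ^ (l - j) * snd p ^ j)"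
  proof
    fix p
    show "h p = (\<Sum>j\<in>{..l} - J0set l m n. b j * fst p ^ (l - j) * snd p ^ j)"
      unfolding h(2) repf_def
      by (rule sum.mono_neutral_right) (use b in auto)
  qed
  then show ?thesis
    by (intro vanish[OF inf phi _ _ _ h(1)]) (auto simp: J0set_def)
qed

lemma rep_some: "h \<in> Lmod l \<Longrightarrow> h = repf l (SOME a. h = repf l a)"
  using Lmod_rep by (metis (mono_tags) someI_ex)

lemma coef:
  fixes \<phi> :: "('k::field \<times> 'k \<Rightarrow> 'k) \<Rightarrow> (('k \<times> 'k) \<times> ('k \<times> 'k) \<Rightarrow> 'k)"
  assumes inf: "infinite (UNIV::'k set)" and phi: "\<phi> \<in> HomG l m n"
  shows "\<exists>C. \<forall>h\<in>Lmod l. \<phi> h ((1,0),(0,1)) = C * psi l m n h"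
proof -
  define A where "A h = (SOME a. h = repf l a)" for h :: "'k \<times> 'k \<Rightarrow> 'k"
  have A: "h \<in> Lmod l \<Longrightarrow> h = repf l (A h)" for h :: "'k \<times> 'k \<Rightarrow> 'k" unfolding A_def by (rule rep_some)
  show ?thesis
  proof (cases "J0set l m n = {}")
    case True
    show ?thesis
      by (rule exI[of _ 0], intro ballI, simp)
         (rule G_vanish[OF inf phi _ A], use True in auto)
  next
    case False
    then obtain j0 where j0: "J0set l m n = {j0}" using J0_cases by blast
    have psi: "psi l m n h = A h j0" for h unfolding psi_def j0 A_def by simp
    show ?thesis
    proof (cases "\<exists>hs\<in>Lmod l. A hs j0 \<noteq> 0")
      case False
      show ?thesis
        by (rule exI[of _ 0], intro ballI, simp)
           (rule G_vanish[OF inf phi _ A], use False j0 in auto)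
    next
      case True
      then obtain hs where hs: "hs \<in> Lmod l" "A hs j0 \<noteq> 0" by blast
      show ?thesis
      proof (rule exI[of _ "\<phi> hs ((1,0),(0,1)) / A hs j0"], intro ballI)
        fix h :: "'k \<times> 'k \<Rightarrow> 'k" assume hL: "h \<in> Lmod l"
        define k where "k = A h j0 / A hs j0"
        define h2 where "h2 = (\<lambda>z. h z + (-k) * hs z)"
        have h2L: "h2 \<in> Lmod l" unfolding h2_def using Lmod_add[OF hL Lmod_smult[OF hs(1)]] .
        have h2r: "h2 = repf l (\<lambda>j. A h j + (-k) * A hs j)"
        proof
          fix p
          have "h2 p = repf l (A h) p + (-k) * repf l (A hs) p"
            unfolding h2_def using A[OF hL] A[OF hs(1)] by metis
          then show "h2 p = repf l (\<lambda>j. A h j + (-k) * A hs j) p"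
            unfolding repf_def by (simp add: sum_distrib_left sum_subtractf sum_negf algebra_simps)
        qed
        have "\<phi> h2 ((1,0),(0,1)) = 0"
          by (rule G_vanish[OF inf phi h2L h2r]) (use j0 hs(2) in \<open>simp add: k_def\<close>)
        moreover have "\<phi> h2 ((1,0),(0,1)) = \<phi> h ((1,0),(0,1)) + (-k) * \<phi> hs ((1,0),(0,1))"
          unfolding h2_def by (rule lin_comb[OF phi hL hs(1)])
        ultimately show "\<phi> h ((1,0),(0,1)) = \<phi> hs ((1,0),(0,1)) / A hs j0 * psi l m n h"
          unfolding psi k_def using hs(2) by (simp add: field_simps)
      qed
    qed
  qed
qed

lemma detform:
  fixes \<phi> :: "('k::field \<times> 'k \<Rightarrow> 'k) \<Rightarrow> (('k \<times> 'k) \<times> ('k \<times> 'k) \<Rightarrow> 'k)"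
  assumes phi: "\<phi> \<in> HomG l m n" and f: "f \<in> Lmod l" and d: "x1 * y2 - x2 * y1 \<noteq> 0"
  shows "\<phi> f ((x1,x2),(y1,y2)) = (x1 * y2 - x2 * y1) ^ n *
     \<phi> (act1 (x1, x2, y1 / (x1 * y2 - x2 * y1), y2 / (x1 * y2 - x2 * y1)) f) ((1,0),(0,1))"
proof -
  define d where "d = x1 * y2 - x2 * y1"
  have dnz: "d \<noteq> 0" using assms unfolding d_def by simp
  define g where "g = (x1, x2, y1 / d, y2 / d)"
  have "x1 * (y2 / d) - x2 * (y1 / d) = (x1 * y2 - x2 * y1) / d" by (simp add: diff_divide_distrib)
  also have "\<dots> = 1" using dnz unfolding d_def by simp
  finally have "x1 * (y2 / d) - x2 * (y1 / d) = 1" .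
  then have g: "g \<in> SL2" unfolding g_def SL2_def by simp
  have 1: "\<phi> (act1 g f) ((1,0),(0,1)) = \<phi> f ((x1,x2),(y1/d,y2/d))"
    unfolding HomG_eq[OF phi g f] by (simp add: act2_def g_def vmul_def)
  have 2: "\<phi> f ((1 * x1, 1 * x2),(d * (y1/d), d * (y2/d))) = (1 ^ m * d ^ n) * \<phi> f ((x1,x2),(y1/d,y2/d))"
    by (rule Ltens_hom) (rule HomG_in[OF phi f])
  show ?thesis using 1 2 dnz unfolding g_def d_def[symmetric] by simp
qed

theorem mainTheorem10:
  assumes "alg_closed TYPE('k::field)"
    and "pos_char TYPE('k)"
  shows "\<exists>\<phi>0. \<forall>\<phi>\<in>(HomG l m n :: (('k \<times> 'k \<Rightarrow> 'k) \<Rightarrow> _) set).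
           \<exists>c. \<forall>f\<in>Lmod l. \<phi> f = (\<lambda>z. c * \<phi>0 f z)"
proof -
  have inf: "infinite (UNIV :: 'k set)" using infinite_K[OF assms(1)] .
  define gg where "gg x1 x2 y1 y2 = (x1, x2, y1 / (x1 * y2 - x2 * y1), y2 / (x1 * y2 - x2 * y1))" for x1 x2 y1 y2 :: 'k
  have form: "\<phi> f ((x1,x2),(y1,y2)) = (x1 * y2 - x2 * y1) ^ n * (C * psi l m n (act1 (gg x1 x2 y1 y2) f))"
    if "\<phi> \<in> HomG l m n" "f \<in> Lmod l" "x1 * y2 - x2 * y1 \<noteq> 0"
       "\<forall>h\<in>Lmod l. \<phi> h ((1,0),(0,1)) = C * psi l m n h"
    for \<phi> :: "('k \<times> 'k \<Rightarrow> 'k) \<Rightarrow> (('k \<times> 'k) \<times> ('k \<times> 'k) \<Rightarrow> 'k)" and f C x1 x2 y1 y2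
  proof -
    define d where "d = x1 * y2 - x2 * y1"
    have dnz: "d \<noteq> 0" using that(3) unfolding d_def by simp
    have "x1 * (y2 / d) - x2 * (y1 / d) = (x1 * y2 - x2 * y1) / d" by (simp add: diff_divide_distrib)
    also have "\<dots> = 1" using dnz unfolding d_def by simp
    finally have "gg x1 x2 y1 y2 \<in> SL2" unfolding gg_def SL2_def d_def[symmetric] by simp
    then have "act1 (gg x1 x2 y1 y2) f \<in> Lmod l" by (rule Lmod_act[OF _ that(2)])
    then show ?thesis using detform[OF that(1-3)] that(4) unfolding gg_def by simp
  qed
  show ?thesis
  proof (cases "\<exists>\<phi>1\<in>(HomG l m n :: (('k \<times> 'k \<Rightarrow> 'k) \<Rightarrow> _) set). \<exists>f1\<in>Lmod l. \<phi>1 f1 \<noteq> (\<lambda>z. 0)")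
    case False
    show ?thesis
    proof (rule exI[of _ "\<lambda>f z. 0"], intro ballI exI[of _ 0])
      fix \<phi> and f :: "'k \<times> 'k \<Rightarrow> 'k" assume a: "\<phi> \<in> (HomG l m n :: (('k \<times> 'k \<Rightarrow> 'k) \<Rightarrow> _) set)" "f \<in> Lmod l"
      then have "\<phi> f = (\<lambda>z. 0)" using False by blast
      then show "\<phi> f = (\<lambda>z. 0 * (\<lambda>f z. 0) f z)" by simp
    qed
  next
    case True
    then obtain \<phi>1 f1 where p1: "\<phi>1 \<in> (HomG l m n :: (('k \<times> 'k \<Rightarrow> 'k) \<Rightarrow> _) set)" "f1 \<in> Lmod l" "\<phi>1 f1 \<noteq> (\<lambda>z. 0)"
      by blast
    obtain C1 where C1: "\<forall>h\<in>Lmod l. \<phi>1 h ((1,0),(0,1)) = C1 * psi l m n h" using coef[OF inf p1(1)] by blast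
    have C1nz: "C1 \<noteq> 0"
    proof
      assume "C1 = 0"
      then have "\<forall>x1 x2 y1 y2. x1 * y2 - x2 * y1 \<noteq> 0 \<longrightarrow> \<phi>1 f1 ((x1, x2), (y1, y2)) = 0"
      proof (intro allI impI)
        fix x1 x2 y1 y2 :: 'k assume "x1 * y2 - x2 * y1 \<noteq> 0"
        from form[OF p1(1,2) this C1] \<open>C1 = 0\<close> show "\<phi>1 f1 ((x1, x2), (y1, y2)) = 0" by simp
      qed
      then have "\<phi>1 f1 = (\<lambda>_. 0)" using density[OF inf HomG_in[OF p1(1,2)]] by blast
      then show False using p1(3) by simp
    qed
    show ?thesis
    proof (rule exI[of _ \<phi>1], intro ballI)
      fix \<phi> assume phi: "\<phi> \<in> (HomG l m n :: (('k \<times> 'k \<Rightarrow> 'k) \<Rightarrow> _) set)"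
      obtain C where C: "\<forall>h\<in>Lmod l. \<phi> h ((1,0),(0,1)) = C * psi l m n h" using coef[OF inf phi] by blast
      show "\<exists>c. \<forall>f\<in>Lmod l. \<phi> f = (\<lambda>z. c * \<phi>1 f z)"
      proof (rule exI[of _ "C / C1"], intro ballI)
        fix f :: "'k \<times> 'k \<Rightarrow> 'k" assume f: "f \<in> Lmod l"
        define D where "D = (\<lambda>z. \<phi> f z + (-1) * (C / C1 * \<phi>1 f z))"
        have DL: "D \<in> Ltens m n" unfolding D_def Ltens_def
          by (intro kspan_add kspan_smult HomG_in[OF phi f, unfolded Ltens_def] HomG_in[OF p1(1) f, unfolded Ltens_def])
        have "\<forall>x1 x2 y1 y2. x1 * y2 - x2 * y1 \<noteq> 0 \<longrightarrow> D ((x1, x2), (y1, y2)) = 0"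
        proof (intro allI impI)
          fix x1 x2 y1 y2 :: 'k assume d: "x1 * y2 - x2 * y1 \<noteq> 0"
          show "D ((x1, x2), (y1, y2)) = 0"
            unfolding D_def form[OF phi f d C] form[OF p1(1) f d C1] using C1nz by (simp add: field_simps)
        qed
        then have D0: "D = (\<lambda>_. 0)" using density[OF inf DL] by blast
        show "\<phi> f = (\<lambda>z. C / C1 * \<phi>1 f z)"
        proof
          fix z
          from fun_cong[OF D0, of z] show "\<phi> f z = C / C1 * \<phi>1 f z"
            unfolding D_def by simp
        qed
      qed
    qed
  qed
qed


end
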